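(* Let $\mathcal H$ be a separable complex Hilbert space, $A\in L(\mathcal H)^+$, and let $T\in L(\mathcal H)$ satisfy $AT^2=AT$. The following are equivalent: (1) $AT=T^*A$; (2) $R(I-T)\subseteq R(AT)^\perp$; (3) $T^*AT\le A$.
   Context: $L(\mathcal H)^+$ denotes positive (semidefinite) bounded operators on $\mathcal H$; $R(\cdot)$ denotes range; $\le$ is the usual order of selfadjoint operators. *)

theory Defs
  imports "HOL-Analysis.Analysis" "HOL-Library.Complex_Order"
begin

text \<open>Complex Hilbert spaces (not in the distribution library): a real Banach space
  with a compatible complex scalar multiplication and a complex inner product
  (antilinear in the first, linear in the second argument) inducing the norm.\<close>

class chilbert_space = banach +
  fixes scaleC :: "complex \<Rightarrow> 'a \<Rightarrow> 'a" (infixr \<open>*\<^sub>C\<close> 75)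
    and cinner :: "'a \<Rightarrow> 'a \<Rightarrow> complex"
  assumes scaleC_add_right: "c *\<^sub>C (x + y) = c *\<^sub>C x + c *\<^sub>C y"
    and scaleC_add_left: "(b + c) *\<^sub>C x = b *\<^sub>C x + c *\<^sub>C x"
    and scaleC_scaleC: "b *\<^sub>C (c *\<^sub>C x) = (b * c) *\<^sub>C x"
    and scaleC_one: "1 *\<^sub>C x = x"
    and scaleR_scaleC: "r *\<^sub>R x = complex_of_real r *\<^sub>C x"
    and cinner_commute: "cinner x y = cnj (cinner y x)"
    and cinner_add_left: "cinner (x + y) z = cinner x z + cinner y z"
    and cinner_scaleC_left: "cinner (c *\<^sub>C x) y = cnj c * cinner x y"
    and cinner_ge_zero: "0 \<le> cinner x x"
    and cinner_eq_zero_iff: "cinner x x = 0 \<longleftrightarrow> x = 0"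
    and norm_eq_sqrt_cinner: "norm x = sqrt (Re (cinner x x))"

definition bounded_clinear :: "('a::chilbert_space \<Rightarrow> 'b::chilbert_space) \<Rightarrow> bool" where
  "bounded_clinear f \<longleftrightarrow>
     (\<forall>x y. f (x + y) = f x + f y) \<and> (\<forall>c x. f (c *\<^sub>C x) = c *\<^sub>C f x) \<and>
     (\<exists>K. \<forall>x. norm (f x) \<le> norm x * K)"

definition cadjoint :: "('a::chilbert_space \<Rightarrow> 'a) \<Rightarrow> ('a \<Rightarrow> 'a)" where
  "cadjoint T = (THE S. \<forall>x y. cinner (S x) y = cinner x (T y))"

definition positive_op :: "('a::chilbert_space \<Rightarrow> 'a) \<Rightarrow> bool" where
  "positive_op A \<longleftrightarrow> bounded_clinear A \<and> (\<forall>x. 0 \<le> cinner x (A x))"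

definition op_le :: "('a::chilbert_space \<Rightarrow> 'a) \<Rightarrow> ('a \<Rightarrow> 'a) \<Rightarrow> bool" where
  "op_le S T \<longleftrightarrow> positive_op (\<lambda>x. T x - S x)"

definition orth :: "'a::chilbert_space set \<Rightarrow> 'a set" where
  "orth M = {y. \<forall>x\<in>M. cinner x y = 0}"

definition separable_space :: "'a::topological_space itself \<Rightarrow> bool" where
  "separable_space _ \<longleftrightarrow> (\<exists>D::'a set. countable D \<and> closure D = UNIV)"

end

theory Submission
  imports Defs
begin

declare [[show_types=false]]


lemma scaleC_zero_left[simp]: "0 *\<^sub>C x = 0"
proof -
  have "0 *\<^sub>C x = complex_of_real 0 *\<^sub>C x" by simp
  also have "\<dots> = 0 *\<^sub>R x" by (rule scaleR_scaleC[symmetric])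
  finally show ?thesis by simp
qed

lemma scaleC_minus1: "(-1) *\<^sub>C x = - x"
proof -
  have "(-1) *\<^sub>C x = complex_of_real (-1) *\<^sub>C x" by simp
  also have "\<dots> = (-1) *\<^sub>R x" by (rule scaleR_scaleC[symmetric])
  finally show ?thesis by simp
qed

lemma scaleC_zero_right[simp]: "c *\<^sub>C (0::'a::chilbert_space) = 0"
proof -
  have "c *\<^sub>C (0::'a) = c *\<^sub>C (0 *\<^sub>C (0::'a))" by simp
  also have "\<dots> = (c * 0) *\<^sub>C (0::'a)" by (rule scaleC_scaleC)
  finally show ?thesis by simp
qed

lemma scaleC_minus_right: "c *\<^sub>C (- x) = - (c *\<^sub>C x)"
proof -
  have "c *\<^sub>C (- x) = c *\<^sub>C ((-1) *\<^sub>C x)" by (simp add: scaleC_minus1)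
  also have "\<dots> = (c * (-1)) *\<^sub>C x" by (rule scaleC_scaleC)
  also have "\<dots> = ((-1) * c) *\<^sub>C x" by simp
  also have "\<dots> = (-1) *\<^sub>C (c *\<^sub>C x)" by (rule scaleC_scaleC[symmetric])
  finally show ?thesis by (simp add: scaleC_minus1)
qed

lemma scaleC_diff_right: "c *\<^sub>C (x - y) = c *\<^sub>C x - c *\<^sub>C y"
proof -
  have "c *\<^sub>C (x - y) = c *\<^sub>C (x + - y)" by simp
  also have "\<dots> = c *\<^sub>C x + c *\<^sub>C (- y)" by (rule scaleC_add_right)
  finally show ?thesis by (simp add: scaleC_minus_right)
qed

lemma cinner_add_right: "cinner x (y + z) = cinner x y + cinner x z"
proof -
  have "cinner x (y + z) = cnj (cinner (y + z) x)" by (rule cinner_commute)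
  also have "\<dots> = cnj (cinner y x) + cnj (cinner z x)" by (simp add: cinner_add_left)
  also have "\<dots> = cinner x y + cinner x z" by (simp add: cinner_commute[of x y] cinner_commute[of x z])
  finally show ?thesis .
qed

lemma cinner_scaleC_right: "cinner x (c *\<^sub>C y) = c * cinner x y"
proof -
  have "cinner x (c *\<^sub>C y) = cnj (cinner (c *\<^sub>C y) x)" by (rule cinner_commute)
  also have "\<dots> = c * cnj (cinner y x)" by (simp add: cinner_scaleC_left)
  also have "\<dots> = c * cinner x y" by (simp add: cinner_commute[of x y])
  finally show ?thesis .
qed

lemma cinner_zero_left[simp]: "cinner 0 y = 0"
proof -
  have "cinner (0::'a::chilbert_space) y = cinner (0 *\<^sub>C (0::'a)) y" by simp
  also have "\<dots> = 0" by (simp only: cinner_scaleC_left) simp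
  finally show ?thesis .
qed

lemma cinner_zero_right[simp]: "cinner y 0 = 0"
proof -
  have "cinner y 0 = cnj (cinner 0 y)" by (rule cinner_commute)
  then show ?thesis by simp
qed

lemma cinner_minus_left: "cinner (- x) y = - cinner x y"
proof -
  have "cinner (- x) y = cinner ((-1) *\<^sub>C x) y" by (simp add: scaleC_minus1)
  also have "\<dots> = - cinner x y" by (simp only: cinner_scaleC_left) simp
  finally show ?thesis .
qed

lemma cinner_minus_right: "cinner x (- y) = - cinner x y"
proof -
  have "cinner x (- y) = cnj (cinner (- y) x)" by (rule cinner_commute)
  also have "\<dots> = - cnj (cinner y x)" by (simp add: cinner_minus_left)
  also have "\<dots> = - cinner x y" by (simp add: cinner_commute[of x y])
  finally show ?thesis .
qed

lemma cinner_diff_left: "cinner (x - y) z = cinner x z - cinner y z"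
  by (simp only: diff_conv_add_uminus cinner_add_left cinner_minus_left)

lemma cinner_diff_right: "cinner x (y - z) = cinner x y - cinner x z"
  by (simp only: diff_conv_add_uminus cinner_add_right cinner_minus_right)

lemma cinner_scaleR_left: "cinner (r *\<^sub>R x) y = complex_of_real r * cinner x y"
  by (simp add: scaleR_scaleC cinner_scaleC_left)

lemma cinner_self: "cinner x x = complex_of_real ((norm x)^2)"
proof -
  have "Im (cinner x x) = 0" "Re (cinner x x) \<ge> 0"
    using cinner_ge_zero[of x] by (auto simp: less_eq_complex_def)
  then show ?thesis by (simp add: norm_eq_sqrt_cinner complex_eq_iff)
qed

lemma cinner_eq_right: "(\<And>y. cinner y a = cinner y b) \<Longrightarrow> a = b"
proof -
  assume h: "\<And>y. cinner y a = cinner y b"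
  have "cinner (a - b) (a - b) = 0" by (simp add: cinner_diff_right h)
  then show "a = b" by (simp add: cinner_eq_zero_iff)
qed

lemma cinner_eq_left: "(\<And>y. cinner a y = cinner b y) \<Longrightarrow> a = b"
proof -
  assume h: "\<And>y. cinner a y = cinner b y"
  have "cinner (a - b) (a - b) = 0" by (simp add: cinner_diff_left h)
  then show "a = b" by (simp add: cinner_eq_zero_iff)
qed

lemma norm_sq_add: "(norm (x + y))^2 = (norm x)^2 + (norm y)^2 + 2 * Re (cinner x y)"
proof -
  have "complex_of_real ((norm (x+y))^2) = cinner (x+y) (x+y)" by (rule cinner_self[symmetric])
  also have "\<dots> = cinner x x + cinner y y + cinner x y + cinner y x"
    by (simp add: cinner_add_left cinner_add_right)
  finally have "complex_of_real ((norm (x+y))^2) = cinner x x + cinner y y + cinner x y + cinner y x" .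
  then have "Re (complex_of_real ((norm (x+y))^2)) = Re (cinner x x + cinner y y + cinner x y + cinner y x)"
    by (rule arg_cong)
  then have "(norm (x+y))^2 = Re (cinner x x + cinner y y + cinner x y + cinner y x)"
    by (simp only: Re_complex_of_real)
  also have "\<dots> = Re (cinner x x) + Re (cinner y y) + Re (cinner x y) + Re (cinner y x)" by simp
  also have "Re (cinner y x) = Re (cinner x y)" by (subst cinner_commute, simp)
  also have "Re (cinner x x) = (norm x)^2" by (subst cinner_self, simp)
  also have "Re (cinner y y) = (norm y)^2" by (subst cinner_self, simp)
  also have "(norm x)^2 + (norm y)^2 + Re (cinner x y) + Re (cinner x y) = (norm x)^2 + (norm y)^2 + 2 * Re (cinner x y)" by simp
  finally show ?thesis .
qed

lemma norm_sq_diff: "(norm (x - y))^2 = (norm x)^2 + (norm y)^2 - 2 * Re (cinner x y)"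
  using norm_sq_add[of x "-y"] by (simp add: cinner_minus_right)

lemma Re_cinner_polar: "Re (cinner x y) = ((norm (x + y))^2 - (norm (x - y))^2) / 4"
  by (simp add: norm_sq_add norm_sq_diff)

lemma small_t:
  fixes a b :: real
  assumes "a \<ge> 0" "b \<ge> 0" "\<And>t. t > 0 \<Longrightarrow> 0 \<le> -2*t*a + t^2 * b"
  shows "a = 0"
proof (rule ccontr)
  assume "a \<noteq> 0"
  then have a: "a > 0" using assms(1) by simp
  define t where "t = a / (b+1)"
  have t: "t > 0" using a assms(2) by (simp add: t_def)
  have "b / (b+1) < 1" using assms(2) by simp
  then have "a * (b / (b+1)) < a * 1" using a by (rule mult_strict_left_mono)
  then have "t * b < a" by (simp add: t_def)
  then have "-2*a + t*b < 0" using a by linarith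
  then have "t * (-2*a + t*b) < 0" using t by (simp add: mult_pos_neg)
  moreover have "-2*t*a + t^2 * b = t * (-2*a + t*b)" by (simp add: power2_eq_square algebra_simps)
  ultimately show False using assms(3)[OF t] by simp
qed

lemma parallelogram: "(norm ((x::'a::chilbert_space) + y))^2 + (norm (x - y))^2 = 2 * (norm x)^2 + 2 * (norm y)^2"
  by (simp add: norm_sq_add norm_sq_diff)

lemma norm_scaleC_sq: "(norm (c *\<^sub>C x))^2 = (cmod c)^2 * (norm x)^2"
proof -
  have "complex_of_real ((norm (c *\<^sub>C x))^2) = cinner (c *\<^sub>C x) (c *\<^sub>C x)" by (rule cinner_self[symmetric])
  also have "\<dots> = cnj c * c * cinner x x"
    by (simp add: cinner_scaleC_left cinner_scaleC_right)
  also have "\<dots> = complex_of_real ((cmod c)^2 * (norm x)^2)"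
    by (simp add: cinner_self) (metis complex_norm_square of_real_power mult.commute)
  finally show ?thesis using of_real_eq_iff by blast
qed

lemma lin_aux: "(a::real) \<le> 2*b + 2*c \<Longrightarrow> b \<le> X \<Longrightarrow> c \<le> X \<Longrightarrow> a \<le> 4*X"
  by linarith

lemma proj_exists:
  fixes M :: "'a::chilbert_space set" and w :: 'a
  assumes cl: "closed M" and z: "0 \<in> M"
    and ad: "\<And>x y. x\<in>M \<Longrightarrow> y\<in>M \<Longrightarrow> x+y \<in> M"
    and sc: "\<And>c x. x\<in>M \<Longrightarrow> c *\<^sub>C x \<in> M"
  shows "\<exists>m\<in>M. \<forall>k\<in>M. cinner k (w - m) = 0"
proof -
  define D where "D = (\<lambda>k. norm (w - k)) ` M"
  define d where "d = Inf D"
  have Dne: "D \<noteq> {}" using z by (auto simp: D_def)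
  have bdd: "bdd_below D" by (auto simp: D_def intro!: bdd_belowI[of _ 0])
  have dle: "\<And>k. k\<in>M \<Longrightarrow> d \<le> norm (w-k)"
    using bdd by (auto simp: d_def D_def intro!: cInf_lower)
  have d0: "0 \<le> d" unfolding d_def using Dne by (auto intro!: cInf_greatest simp: D_def)
  define e where "e n = inverse (real (Suc n))" for n
  have epos: "e n > 0" for n by (simp add: e_def)
  have ele1: "e n \<le> 1" for n by (simp add: e_def inverse_le_1_iff)
  have ex: "\<exists>k\<in>M. norm (w-k) < d + e n" for n
  proof -
    have "Inf D < d + e n" using epos[of n] by (simp add: d_def)
    from cInf_lessD[OF Dne this] show ?thesis by (auto simp: D_def)
  qed
  then obtain kk where kk: "\<And>n. kk n \<in> M" "\<And>n. norm (w - kk n) < d + e n" by metis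
  have emono: "e m \<le> e n" if "n \<le> m" for n m
    using that by (simp add: e_def le_imp_inverse_le)
  have key: "(norm (kk n - kk m))^2 \<le> 2*((d+e n)^2 - d^2) + 2*((d+e m)^2 - d^2)" for n m
  proof -
    have mid: "(1/2::real) *\<^sub>R (kk n + kk m) \<in> M" using sc ad kk by (simp add: scaleR_scaleC)
    have eq: "(w - kk n) + (w - kk m) = 2 *\<^sub>R (w - (1/2::real) *\<^sub>R (kk n + kk m))"
      by (simp add: algebra_simps scaleR_2)
    have "2*d \<le> 2 * norm (w - (1/2::real) *\<^sub>R (kk n + kk m))" using dle[OF mid] by simp
    also have "\<dots> = norm ((w - kk n) + (w - kk m))" by (simp add: eq)
    finally have h1: "2*d \<le> norm ((w - kk n) + (w - kk m))" .
    then have h2: "(2*d)^2 \<le> (norm ((w - kk n) + (w - kk m)))^2" using d0 by (intro power_mono) auto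
    have pl: "(norm ((w - kk n) + (w - kk m)))^2 + (norm ((w - kk n) - (w - kk m)))^2
        = 2 * (norm (w - kk n))^2 + 2 * (norm (w - kk m))^2" by (rule parallelogram)
    have "(w - kk n) - (w - kk m) = kk m - kk n" by simp
    then have h3: "norm ((w - kk n) - (w - kk m)) = norm (kk n - kk m)" by (simp add: norm_minus_commute)
    have h4: "(norm (w - kk n))^2 \<le> (d + e n)^2" using kk(2)[of n] by (intro power_mono) auto
    have h5: "(norm (w - kk m))^2 \<le> (d + e m)^2" using kk(2)[of m] by (intro power_mono) auto
    show ?thesis using h2 pl h3 h4 h5 by (simp add: power2_eq_square)
  qed
  have cauchy: "Cauchy kk"
  proof (rule metric_CauchyI)
    fix \<epsilon>::real assume ep: "\<epsilon> > 0"
    define \<delta> where "\<delta> = min 1 (\<epsilon>^2 / (8*(2*d+1)))"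
    have \<delta>pos: "\<delta> > 0" using ep d0 by (simp add: \<delta>_def)
    obtain N where N: "inverse (real (Suc N)) < \<delta>" using reals_Archimedean[OF \<delta>pos] by blast
    have bnd: "(d + e n)^2 - d^2 \<le> \<delta> * (2*d+1)" if "n \<ge> N" for n
    proof -
      have en: "e n \<le> \<delta>" using emono[OF that] N unfolding e_def by linarith
      have "(d + e n)^2 - d^2 = e n * (2*d + e n)" by (simp add: power2_eq_square algebra_simps)
      also have "\<dots> \<le> \<delta> * (2*d+1)" using en ele1[of n] epos[of n] d0
        by (intro mult_mono) auto
      finally show ?thesis .
    qed
    have d8: "\<delta> * (2*d+1) \<le> \<epsilon>^2 / 8"
    proof -
      have "\<delta> \<le> \<epsilon>^2 / (8*(2*d+1))" by (simp add: \<delta>_def)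
      then have "\<delta> * (2*d+1) \<le> \<epsilon>^2 / (8*(2*d+1)) * (2*d+1)" using d0 by (intro mult_right_mono) auto
      also have "\<dots> = \<epsilon>^2/8" using d0 by (simp add: field_simps)
      finally show ?thesis .
    qed
    show "\<exists>N. \<forall>m\<ge>N. \<forall>n\<ge>N. dist (kk m) (kk n) < \<epsilon>"
    proof (intro exI allI impI)
      fix m n assume m: "m \<ge> N" and n: "n \<ge> N"
      have "(norm (kk m - kk n))^2 \<le> 4 * (\<delta> * (2*d+1))" 
        by (rule lin_aux[OF key[of m n] bnd[OF m] bnd[OF n]])
      also have "\<dots> \<le> 4 * (\<epsilon>^2/8)" using d8 by linarith
      also have "\<dots> < \<epsilon>^2" using ep by simp
      finally have "(norm (kk m - kk n))^2 < \<epsilon>^2" .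
      then have "norm (kk m - kk n) < \<epsilon>" using power_less_imp_less_base[of "norm (kk m - kk n)" 2 \<epsilon>] ep by simp
      then show "dist (kk m) (kk n) < \<epsilon>" by (simp add: dist_norm)
    qed
  qed
  then obtain m where lim: "kk \<longlonglongrightarrow> m" using Cauchy_convergent convergent_def by blast
  have mM: "m \<in> M" using closed_sequentially[OF cl] kk(1) lim by blast
  have "norm (w - m) \<le> d"
  proof (rule LIMSEQ_le)
    show "(\<lambda>n. norm (w - kk n)) \<longlonglongrightarrow> norm (w - m)" by (intro tendsto_intros lim)
    have "(\<lambda>n. d + e n) \<longlonglongrightarrow> d + 0" unfolding e_def
      by (intro tendsto_intros LIMSEQ_inverse_real_of_nat)
    then show "(\<lambda>n. d + e n) \<longlonglongrightarrow> d" by simp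
    show "\<exists>N. \<forall>n\<ge>N. norm (w - kk n) \<le> d + e n" using kk(2) less_imp_le by blast
  qed
  then have minim: "\<And>k. k\<in>M \<Longrightarrow> norm (w - m) \<le> norm (w - k)" using dle by force
  show ?thesis
  proof (intro bexI[OF _ mM] ballI)
    fix k assume kM: "k \<in> M"
    define p where "p = w - m"
    define c where "c = cinner k p"
    have "(cmod c)^2 = 0"
    proof (rule small_t)
      show "0 \<le> (cmod c)^2" by simp
      show "0 \<le> (cmod c)^2 * (norm k)^2" by simp
      fix t::real assume t: "t > 0"
      define s where "s = complex_of_real t * c"
      have "m + s *\<^sub>C k \<in> M" using ad sc kM mM by blast
      from minim[OF this] have "norm p \<le> norm (p - s *\<^sub>C k)" by (simp add: p_def algebra_simps)
      then have i1: "(norm p)^2 \<le> (norm (p - s *\<^sub>C k))^2" by (intro power_mono) auto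
      have i2: "(norm (p - s *\<^sub>C k))^2 = (norm p)^2 + (norm (s *\<^sub>C k))^2 - 2 * Re (cinner p (s *\<^sub>C k))"
        by (rule norm_sq_diff)
      have i3: "(norm (s *\<^sub>C k))^2 = t^2 * (cmod c)^2 * (norm k)^2"
        using t by (simp add: norm_scaleC_sq s_def norm_mult power_mult_distrib)
      have "cinner p (s *\<^sub>C k) = complex_of_real t * (c * cnj c)"
        by (simp add: cinner_scaleC_right s_def c_def cinner_commute[of p k])
      also have "\<dots> = complex_of_real (t * (cmod c)^2)"
        by (simp add: complex_norm_square[symmetric])
      finally have i4: "Re (cinner p (s *\<^sub>C k)) = t * (cmod c)^2" by simp
      show "0 \<le> -2*t*(cmod c)^2 + t^2 * ((cmod c)^2 * (norm k)^2)"
        using i1 i2 i3 i4 by (simp add: algebra_simps)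
    qed
    then show "cinner k (w - m) = 0" by (simp add: c_def p_def)
  qed
qed

lemma cnj_sq: "c * cnj c = (complex_of_real (cmod c))^2"
  by (metis complex_norm_square of_real_power)

lemma bclin_add: "bounded_clinear T \<Longrightarrow> T (x + y) = T x + T y"
  by (simp add: bounded_clinear_def)

lemma bclin_scale: "bounded_clinear T \<Longrightarrow> T (c *\<^sub>C x) = c *\<^sub>C T x"
  by (simp add: bounded_clinear_def)

lemma bclin_blin: "bounded_clinear T \<Longrightarrow> bounded_linear T"
proof -
  assume a: "bounded_clinear T"
  then obtain K where K: "\<And>x. norm (T x) \<le> norm x * K" by (auto simp: bounded_clinear_def)
  show ?thesis
  proof (rule bounded_linear_intro[OF _ _ K])
    show "T (x + y) = T x + T y" for x y using a by (rule bclin_add)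
    show "T (r *\<^sub>R x) = r *\<^sub>R T x" for r x using a by (simp add: scaleR_scaleC bclin_scale)
  qed
qed

lemma bclin_diff: "bounded_clinear T \<Longrightarrow> T (x - y) = T x - T y"
  using bclin_blin linear_diff bounded_linear.linear by blast

lemma cont_cinner:
  fixes g :: "'b::topological_space \<Rightarrow> 'a::chilbert_space"
  assumes g: "continuous_on UNIV g"
  shows "continuous_on UNIV (\<lambda>y. cinner x (g y))"
proof -
  have re: "continuous_on UNIV (\<lambda>y. Re (cinner u (g y)))" for u
    unfolding Re_cinner_polar by (intro continuous_intros g) auto
  have im: "Im (cinner x z) = Re (cinner (\<i> *\<^sub>C x) z)" for z
    by (simp add: cinner_scaleC_left)
  have eq: "(\<lambda>y. cinner x (g y)) = (\<lambda>y. Complex (Re (cinner x (g y))) (Re (cinner (\<i> *\<^sub>C x) (g y))))"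
    by (simp add: im[symmetric] complex_eq_iff)
  show ?thesis unfolding eq by (intro continuous_intros re)
qed

lemma riesz:
  fixes f :: "'a::chilbert_space \<Rightarrow> complex"
  assumes add: "\<And>x y. f (x + y) = f x + f y"
    and sc: "\<And>c x. f (c *\<^sub>C x) = c * f x"
    and cont: "continuous_on UNIV f"
  shows "\<exists>z. \<forall>y. f y = cinner z y"
proof (cases "\<forall>y. f y = 0")
  case True
  then show ?thesis by (intro exI[of _ 0]) simp
next
  case False
  then obtain w where w: "f w \<noteq> 0" by blast
  have fdiff: "f (x - y) = f x - f y" for x y
    using add[of "x - y" y] by simp
  have f0: "f 0 = 0" using add[of 0 0] by simp
  define M where "M = {y. f y = 0}"
  have cl: "closed M" unfolding M_def
    by (rule closed_Collect_eq[OF cont continuous_on_const])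
  have "\<exists>m\<in>M. \<forall>k\<in>M. cinner k (w - m) = 0"
    by (rule proj_exists[OF cl]) (auto simp: M_def f0 add sc)
  then obtain m where mM: "f m = 0" and orth: "\<And>k. f k = 0 \<Longrightarrow> cinner k (w - m) = 0"
    by (auto simp: M_def)
  define p where "p = w - m"
  have fp: "f p \<noteq> 0" using w mM by (simp add: p_def fdiff)
  have "p \<noteq> 0" using fp f0 by auto
  then have pp: "cinner p p \<noteq> 0" by (simp add: cinner_eq_zero_iff)
  have cpp: "cnj (cinner p p) = cinner p p" using cinner_commute[of p p] by simp
  define z where "z = (cnj (f p) / cinner p p) *\<^sub>C p"
  show ?thesis
  proof (intro exI allI)
    fix y
    have "f (f y *\<^sub>C p - f p *\<^sub>C y) = 0" by (simp add: fdiff sc)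
    then have "cinner (f y *\<^sub>C p - f p *\<^sub>C y) p = 0" using orth p_def by blast
    then have "cnj (f y) * cinner p p - cnj (f p) * cinner y p = 0"
      by (simp add: cinner_diff_left cinner_scaleC_left)
    then have "cnj (cnj (f y) * cinner p p - cnj (f p) * cinner y p) = 0" by simp
    then have e: "f y * cinner p p = f p * cinner p y"
      using cpp cinner_commute[of p y] by simp
    have "cinner z y = f p / cinner p p * cinner p y"
      using cpp by (simp add: z_def cinner_scaleC_left)
    also have "\<dots> = f y" using e pp by (simp add: field_simps)
    finally show "f y = cinner z y" by simp
  qed
qed

lemma adjoint_prop:
  assumes T: "bounded_clinear T"
  shows "cinner (cadjoint T x) y = cinner x (T y)"
proof -
  have "\<forall>x. \<exists>z. \<forall>y. cinner x (T y) = cinner z y"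
  proof
    fix x
    show "\<exists>z. \<forall>y. cinner x (T y) = cinner z y"
    proof (rule riesz)
      show "cinner x (T (a + b)) = cinner x (T a) + cinner x (T b)" for a b
        using T by (simp add: bclin_add cinner_add_right)
      show "cinner x (T (c *\<^sub>C a)) = c * cinner x (T a)" for c a
        using T by (simp add: bclin_scale cinner_scaleC_right)
      show "continuous_on UNIV (\<lambda>y. cinner x (T y))"
        by (rule cont_cinner, rule linear_continuous_on, rule bclin_blin[OF T])
    qed
  qed
  then obtain S where S: "\<And>x y. cinner x (T y) = cinner (S x) y" by metis
  have "cadjoint T = S" unfolding cadjoint_def
  proof (rule the_equality)
    show "\<forall>x y. cinner (S x) y = cinner x (T y)" using S by simp
    fix S' assume "\<forall>x y. cinner (S' x) y = cinner x (T y)"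
    then show "S' = S" using S by (intro ext cinner_eq_left) simp
  qed
  then show ?thesis using S by simp
qed

lemma herm:
  assumes A: "positive_op A"
  shows "cinner (A x) y = cinner x (A y)"
proof -
  have Ab: "bounded_clinear A" and pos: "\<And>z. 0 \<le> cinner z (A z)" using A by (auto simp: positive_op_def)
  have im0: "Im (cinner z (A z)) = 0" for z using pos[of z] by (simp add: less_eq_complex_def)
  have "Im (cinner (x + y) (A (x + y))) = 0" by (rule im0)
  then have h1: "Im (cinner x (A y)) + Im (cinner y (A x)) = 0"
    using Ab im0[of x] im0[of y]
    by (simp add: bclin_add cinner_add_left cinner_add_right)
  have "Im (cinner (x + \<i> *\<^sub>C y) (A (x + \<i> *\<^sub>C y))) = 0" by (rule im0)
  then have h2: "Re (cinner x (A y)) - Re (cinner y (A x)) = 0"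
    using Ab im0[of x] im0[of y]
    by (simp add: bclin_add bclin_scale cinner_add_left cinner_add_right cinner_scaleC_left cinner_scaleC_right)
  have "cinner (A x) y = cnj (cinner y (A x))" by (rule cinner_commute)
  also have "\<dots> = cinner x (A y)" using h1 h2 by (simp add: complex_eq_iff)
  finally show ?thesis .
qed

theorem mainTheorem4:
  fixes A T :: "'a::chilbert_space \<Rightarrow> 'a"
  assumes "separable_space TYPE('a)"
    and "positive_op A"
    and "bounded_clinear T"
    and "A \<circ> T \<circ> T = A \<circ> T"
  shows "((A \<circ> T = cadjoint T \<circ> A) \<longleftrightarrow> range (\<lambda>x. x - T x) \<subseteq> orth (range (A \<circ> T)))
       \<and> ((A \<circ> T = cadjoint T \<circ> A) \<longleftrightarrow> op_le (cadjoint T \<circ> A \<circ> T) A)"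
proof -
  define S where "S = cadjoint T"
  have Tb: "bounded_clinear T" by fact
  have Ab: "bounded_clinear A" using assms(2) by (simp add: positive_op_def)
  have pos: "\<And>z. 0 \<le> cinner z (A z)" using assms(2) by (simp add: positive_op_def)
  have H: "\<And>x y. cinner (A x) y = cinner x (A y)" using herm[OF assms(2)] .
  have adj: "\<And>x y. cinner (S x) y = cinner x (T y)" using adjoint_prop[OF Tb] by (simp add: S_def)
  have idem: "\<And>x. A (T (T x)) = A (T x)" using assms(4) by (metis comp_apply)
  have Ad: "\<And>x y. A (x - y) = A x - A y" using Ab by (rule bclin_diff)
  have Td: "\<And>x y. T (x - y) = T x - T y" using Tb by (rule bclin_diff)
  have P1: "(A \<circ> T = S \<circ> A) \<longleftrightarrow> (\<forall>x. A (T x) = S (A x))" by (auto simp: fun_eq_iff)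
  have P2: "range (\<lambda>x. x - T x) \<subseteq> orth (range (A \<circ> T)) \<longleftrightarrow>
      (\<forall>x y. cinner (A (T y)) (x - T x) = 0)" by (auto simp: orth_def)
  have P3: "op_le (S \<circ> A \<circ> T) A \<longleftrightarrow> positive_op (\<lambda>x. A x - S (A (T x)))"
    by (simp add: op_le_def)
  have i12: "\<forall>x y. cinner (A (T y)) (x - T x) = 0" if p1: "\<forall>x. A (T x) = S (A x)"
  proof (intro allI)
    fix x y
    have "cinner (A (T y)) (T x) = cinner (S (A (T y))) x" by (simp add: adj)
    also have "\<dots> = cinner (A (T y)) x" using p1 idem by metis
    finally show "cinner (A (T y)) (x - T x) = 0" by (simp add: cinner_diff_right)
  qed
  have i21: "\<forall>x. A (T x) = S (A x)" if p2: "\<forall>x y. cinner (A (T y)) (x - T x) = 0"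
  proof
    fix x
    show "A (T x) = S (A x)"
    proof (rule cinner_eq_right)
      fix y
      have a: "cinner (A (T y)) x = cinner (A (T y)) (T x)" using p2 by (simp add: cinner_diff_right)
      have b: "cinner (A (T x)) y = cinner (A (T x)) (T y)" using p2 by (simp add: cinner_diff_right)
      have "cinner y (S (A x)) = cnj (cinner (S (A x)) y)" by (rule cinner_commute)
      also have "\<dots> = cnj (cinner (A x) (T y))" by (simp add: adj)
      also have "\<dots> = cinner (T y) (A x)" by (simp add: cinner_commute[of "T y"])
      also have "\<dots> = cinner (A (T y)) x" by (simp add: H)
      finally have c: "cinner y (S (A x)) = cinner (A (T y)) x" .
      have "cinner y (A (T x)) = cnj (cinner (A (T x)) y)" by (rule cinner_commute)
      also have "\<dots> = cnj (cinner (A (T x)) (T y))" using b by simp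
      also have "\<dots> = cinner (T y) (A (T x))" by (simp add: cinner_commute[of "T y"])
      also have "\<dots> = cinner (A (T y)) (T x)" by (simp add: H)
      finally show "cinner y (A (T x)) = cinner y (S (A x))" using a c by simp
    qed
  qed
  have i13: "positive_op (\<lambda>x. A x - S (A (T x)))" if p1: "\<forall>x. A (T x) = S (A x)"
  proof -
    have eq: "(\<lambda>x. A x - S (A (T x))) = (\<lambda>x. A x - A (T x))"
      using p1 idem by (metis)
    have p2: "\<forall>x y. cinner (A (T y)) (x - T x) = 0" using i12 p1 by blast
    obtain KA where KA: "\<And>x. norm (A x) \<le> norm x * KA" using Ab by (auto simp: bounded_clinear_def)
    obtain KT where KT: "\<And>x. norm (T x) \<le> norm x * KT" using Tb by (auto simp: bounded_clinear_def)
    have bc: "bounded_clinear (\<lambda>x. A x - A (T x))"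
      unfolding bounded_clinear_def
    proof (intro conjI allI exI)
      show "A (x + y) - A (T (x + y)) = A x - A (T x) + (A y - A (T y))" for x y
        using Ab Tb by (simp add: bclin_add)
      show "A (c *\<^sub>C x) - A (T (c *\<^sub>C x)) = c *\<^sub>C (A x - A (T x))" for c x
        using Ab Tb by (simp add: bclin_scale scaleC_diff_right)
      fix x
      have a1: "norm (A x) \<le> norm x * max KA 0" using KA[of x] by (meson max.cobounded1 mult_left_mono norm_ge_zero order_trans)
      have a2: "norm (A (T x)) \<le> norm (T x) * max KA 0" using KA[of "T x"] by (meson max.cobounded1 mult_left_mono norm_ge_zero order_trans)
      have a3: "norm (T x) \<le> norm x * max KT 0" using KT[of x] by (meson max.cobounded1 mult_left_mono norm_ge_zero order_trans)
      have a4: "norm (T x) * max KA 0 \<le> norm x * max KT 0 * max KA 0" using a3 by (intro mult_right_mono) auto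
      have "norm (A x - A (T x)) \<le> norm (A x) + norm (A (T x))" by (rule norm_triangle_ineq4)
      also have "\<dots> \<le> norm x * (max KA 0 * (1 + max KT 0))" using a1 a2 a4 by (simp add: algebra_simps)
      finally show "norm (A x - A (T x)) \<le> norm x * (max KA 0 * (1 + max KT 0))" .
    qed
    have ps: "0 \<le> cinner x (A x - A (T x))" for x
    proof -
      define u where "u = x - T x"
      have "cinner x (A x - A (T x)) = cinner x (A u)" by (simp add: u_def Ad)
      also have "\<dots> = cinner u (A u) + cinner (T x) (A u)" by (simp add: u_def cinner_diff_left)
      also have "cinner (T x) (A u) = cinner (A (T x)) u" by (simp add: H)
      also have "\<dots> = 0" using p2 by (simp add: u_def)
      finally show ?thesis using pos[of u] by simp
    qed
    show ?thesis unfolding eq positive_op_def using bc ps by simp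
  qed
  have i32: "\<forall>x y. cinner (A (T y)) (x - T x) = 0" if p3: "positive_op (\<lambda>x. A x - S (A (T x)))"
  proof (intro allI)
    fix w y
    have q: "0 \<le> Re (cinner x (A x)) - Re (cinner (T x) (A (T x)))" for x
    proof -
      have "0 \<le> cinner x (A x - S (A (T x)))" using p3 by (simp add: positive_op_def)
      also have "cinner x (S (A (T x))) = cinner (T x) (A (T x))"
        using cinner_commute[of x "S (A (T x))"] adj[of "A (T x)" x] cinner_commute[of "A (T x)" "T x"] by simp
      then have "cinner x (A x - S (A (T x))) = cinner x (A x) - cinner (T x) (A (T x))"
        by (simp add: cinner_diff_right)
      finally show ?thesis by (simp add: less_eq_complex_def)
    qed
    define u where "u = w - T w"
    define v where "v = T y"
    have ATu: "A (T u) = 0" using idem by (simp add: u_def Td Ad)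
    have Av: "A v = A (T y)" by (simp add: v_def)
    define c where "c = cinner (A v) u"
    have "(cmod c)^2 = 0"
    proof (rule small_t)
      show "0 \<le> (cmod c)^2" by simp
      show "0 \<le> (cmod c)^2 * Re (cinner u (A u))" using pos[of u] by (simp add: less_eq_complex_def)
      fix t::real assume t: "t > 0"
      define s where "s = - (complex_of_real t * cnj c)"
      define x where "x = v + s *\<^sub>C u"
      have ATx: "A (T x) = A v" using Ab Tb ATu idem
        by (simp add: x_def v_def bclin_add bclin_scale)
      have e1: "cinner (T x) (A (T x)) = cinner v (A v)"
        using ATx by (simp add: H[symmetric] cinner_commute[of v])
      have Ax: "A x = A v + s *\<^sub>C A u" using Ab by (simp add: x_def bclin_add bclin_scale)
      have cc: "cinner v (A u) = c" by (simp add: c_def H)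
      have cc2: "cinner u (A v) = cnj c" by (simp add: c_def cinner_commute[of u])
      have xx: "cinner x (A x) = cinner (v + s *\<^sub>C u) (A v + s *\<^sub>C A u)"
        by (simp only: Ax, simp only: x_def)
      have "cinner x (A x) = cinner v (A v) + s * c + cnj s * cnj c + cnj s * s * cinner u (A u)"
        using cc cc2 by (simp add: xx cinner_add_left cinner_add_right cinner_scaleC_left cinner_scaleC_right algebra_simps)
      also have "s * c = - complex_of_real (t * (cmod c)^2)"
      proof -
        have "s * c = - (complex_of_real t * (c * cnj c))" by (simp add: s_def algebra_simps)
        also have "\<dots> = - complex_of_real (t * (cmod c)^2)" by (simp add: complex_norm_square[symmetric])
        finally show ?thesis .
      qed
      also have "cnj s * cnj c = - complex_of_real (t * (cmod c)^2)"
      proof -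
        have "cnj s * cnj c = - (complex_of_real t * (c * cnj c))" by (simp add: s_def algebra_simps)
        also have "\<dots> = - complex_of_real (t * (cmod c)^2)" by (simp add: complex_norm_square[symmetric])
        finally show ?thesis .
      qed
      also have "cnj s * s = complex_of_real (t^2 * (cmod c)^2)"
      proof -
        have "cnj s * s = complex_of_real (t^2) * (c * cnj c)" by (simp add: s_def power2_eq_square algebra_simps)
        also have "\<dots> = complex_of_real (t^2 * (cmod c)^2)" by (simp add: complex_norm_square[symmetric])
        finally show ?thesis .
      qed
      finally have "Re (cinner x (A x)) = Re (cinner v (A v)) - 2 * (t * (cmod c)^2) + t^2 * (cmod c)^2 * Re (cinner u (A u))"
        by simp
      then show "0 \<le> -2*t*(cmod c)^2 + t^2 * ((cmod c)^2 * Re (cinner u (A u)))"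
        using q[of x] e1 by (simp add: algebra_simps)
    qed
    then show "cinner (A (T y)) (w - T w) = 0" by (simp add: c_def u_def v_def)
  qed
  have r1: "(\<forall>x. A (T x) = S (A x)) = (\<forall>x y. cinner (A (T y)) (x - T x) = 0)"
    using i12 i21 by (rule iffI)
  have r2: "(\<forall>x. A (T x) = S (A x)) = positive_op (\<lambda>x. A x - S (A (T x)))"
  proof (rule iffI)
    assume "\<forall>x. A (T x) = S (A x)" then show "positive_op (\<lambda>x. A x - S (A (T x)))" by (rule i13)
  next
    assume "positive_op (\<lambda>x. A x - S (A (T x)))"
    then show "\<forall>x. A (T x) = S (A x)" by (rule i21[OF i32])
  qed
  show ?thesis
    unfolding S_def[symmetric] P1 P2 P3 using r1 r2 by (rule conjI)
qed

end
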